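(* Let $\rho\neq\delta_0$ be a Borel probability measure on $\mathbb{R}_+$ and let $p\ge 2$ be an integer with $m_k(\rho)=\int x^k\rho(dx)<\infty$ for $k=0,\dots,p$. Write $\mathrm{Var}(\rho)=m_2(\rho)-m_1(\rho)^2$. (1) The $S$-transform of $\rho$ admits an expansion \[ S_\rho(z)=\sum_{k=0}^{p-1}s_k(\rho)z^{k}+o(z^{p-1})\qquad\text{as } z\to0,\ z\in\mathfrak{D}_\rho, \] with $s_0(\rho)=\frac1{m_1(\rho)}$ and $s_1(\rho)=\frac1{m_1(\rho)}-\frac{m_2(\rho)}{m_1(\rho)^3}=-\frac{\mathrm{Var}(\rho)}{m_1(\rho)^3}$. (2) The $\Sigma$-transform of $\rho$ admits an expansion \[ \Sigma_\rho(z)=\sum_{k=0}^{p-1}\sigma_k(\rho)z^{k}+o(z^{p-1})\qquad\text{as } z\to0 \text{ with } z/(1-z)\in\mathfrak{D}_\rho, \] with $\sigma_0(\rho)=\frac1{m_1(\rho)}$ and $\sigma_1(\rho)=\frac1{m_1(\rho)}-\frac{m_2(\rho)}{m_1(\rho)^3}=-\frac{\mathrm{Var}(\rho)}{m_1(\rho)^3}$.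
   Context: $i\mathbb{C}^+=\{iz:\operatorname{Im}z>0\}$. For a probability measure $\rho\neq\delta_0$ on $\mathbb{R}_+$: $\Psi_\rho(z)=\int\frac{xz}{1-xz}\rho(dx)$ is univalent on $i\mathbb{C}^+$; $\mathfrak{D}_\rho:=\Psi_\rho(i\mathbb{C}^+)$ and $\Psi_\rho^{-1}:\mathfrak{D}_\rho\to i\mathbb{C}^+$ is its inverse. The $S$-transform is $S_\rho(z)=\frac{(z+1)\Psi_\rho^{-1}(z)}{z}$ for $z\in\mathfrak{D}_\rho$, and the $\Sigma$-transform is $\Sigma_\rho(z)=S_\rho\!\left(\frac{z}{1-z}\right)$ whenever $\frac{z}{1-z}\in\mathfrak{D}_\rho$. *)

theory Defs
  imports "HOL-Probability.Probability" "HOL-Library.Landau_Symbols"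
begin

definition iCplus :: "complex set" where
  "iCplus = {\<i> * z | z. Im z > 0}"

definition Psi :: "real measure \<Rightarrow> complex \<Rightarrow> complex" where
  "Psi \<rho> z = (\<integral>x. complex_of_real x * z / (1 - complex_of_real x * z) \<partial>\<rho>)"

definition Ddom :: "real measure \<Rightarrow> complex set" where
  "Ddom \<rho> = Psi \<rho> ` iCplus"

definition Psi_inv :: "real measure \<Rightarrow> complex \<Rightarrow> complex" where
  "Psi_inv \<rho> = inv_into iCplus (Psi \<rho>)"

definition S_transform :: "real measure \<Rightarrow> complex \<Rightarrow> complex" where
  "S_transform \<rho> z = (z + 1) * Psi_inv \<rho> z / z"

definition Sigma_transform :: "real measure \<Rightarrow> complex \<Rightarrow> complex" where
  "Sigma_transform \<rho> z = S_transform \<rho> (z / (1 - z))"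

definition moment :: "real measure \<Rightarrow> nat \<Rightarrow> real" where
  "moment \<rho> k = (\<integral>x. x ^ k \<partial>\<rho>)"

definition Var :: "real measure \<Rightarrow> real" where
  "Var \<rho> = moment \<rho> 2 - (moment \<rho> 1)^2"

end

theory Submission
  imports Defs "HOL-Computational_Algebra.Polynomial_FPS"
begin

definition evc :: "real poly \<Rightarrow> complex \<Rightarrow> complex" where
  "evc q z = poly (map_poly complex_of_real q) z"

lemma map_poly_of_real_add:
  "map_poly (of_real :: real \<Rightarrow> complex) (p + q) = map_poly of_real p + map_poly of_real q"
  by (rule poly_eqI) (simp add: coeff_map_poly)

lemma map_poly_of_real_mult:
  "map_poly (of_real :: real \<Rightarrow> complex) (p * q) = map_poly of_real p * map_poly of_real q"
  by (rule poly_eqI) (simp add: coeff_map_poly coeff_mult)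

lemma map_poly_of_real_pcompose:
  "map_poly (of_real :: real \<Rightarrow> complex) (pcompose p q) = pcompose (map_poly of_real p) (map_poly of_real q)"
proof (induction p rule: pCons_induct)
  case 0
  then show ?case by simp
next
  case (pCons a p)
  then show ?case
    by (simp add: pcompose_pCons map_poly_of_real_add map_poly_of_real_mult map_poly_pCons)
qed

lemma evc_pcompose: "evc (pcompose q r) z = evc q (evc r z)"
  by (simp add: evc_def map_poly_of_real_pcompose poly_pcompose)

lemma evc_sum:
  assumes "degree q < n"
  shows "evc q z = (\<Sum>k<n. complex_of_real (coeff q k) * z ^ k)"
proof -
  have "evc q z = (\<Sum>k\<le>degree q. complex_of_real (coeff q k) * z ^ k)"
    unfolding evc_def poly_altdef by (simp add: coeff_map_poly degree_map_poly)
  also have "\<dots> = (\<Sum>k<n. complex_of_real (coeff q k) * z ^ k)"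
    using assms by (intro sum.mono_neutral_left) (auto simp: coeff_eq_0)
  finally show ?thesis .
qed

lemma tail_bigo:
  fixes c :: "nat \<Rightarrow> complex"
  shows "(\<lambda>z. \<Sum>k\<in>{n..<N}. c k * z ^ k) \<in> O[at 0 within A](\<lambda>z. z ^ n)"
proof (rule bigoI)
  have ev: "eventually (\<lambda>z::complex. norm z < 1) (at 0 within A)"
  proof -
    have "((\<lambda>z::complex. norm z) \<longlongrightarrow> 0) (at 0 within A)"
      by (intro tendsto_norm_zero tendsto_ident_at)
    then show ?thesis by (rule order_tendstoD) simp
  qed
  show "eventually (\<lambda>z. norm (\<Sum>k\<in>{n..<N}. c k * z ^ k) \<le> (\<Sum>k\<in>{n..<N}. norm (c k)) * norm (z ^ n)) (at 0 within A)"
    using ev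
  proof eventually_elim
    case (elim z)
    have "norm (\<Sum>k\<in>{n..<N}. c k * z ^ k) \<le> (\<Sum>k\<in>{n..<N}. norm (c k * z ^ k))"
      by (rule norm_sum)
    also have "\<dots> \<le> (\<Sum>k\<in>{n..<N}. norm (c k) * norm (z ^ n))"
    proof (intro sum_mono)
      fix k assume k: "k \<in> {n..<N}"
      have "norm (z ^ k) = norm z ^ n * norm z ^ (k - n)"
        using k by (simp add: norm_power flip: power_add)
      also have "\<dots> \<le> norm z ^ n * 1"
        using elim by (intro mult_left_mono power_le_one) auto
      finally show "norm (c k * z ^ k) \<le> norm (c k) * norm (z ^ n)"
        by (simp add: norm_mult norm_power mult_left_mono)
    qed
    also have "\<dots> = (\<Sum>k\<in>{n..<N}. norm (c k)) * norm (z ^ n)"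
      by (simp add: sum_distrib_right)
    finally show ?case .
  qed
qed

lemma evc_tail:
  "(\<lambda>z. evc q z - (\<Sum>k<n. complex_of_real (coeff q k) * z ^ k)) \<in> O[at 0 within A](\<lambda>z. z ^ n)"
proof -
  define N where "N = Suc (max n (degree q))"
  have "evc q z - (\<Sum>k<n. complex_of_real (coeff q k) * z ^ k)
        = (\<Sum>k\<in>{n..<N}. complex_of_real (coeff q k) * z ^ k)" for z
  proof -
    have "evc q z = (\<Sum>k<N. complex_of_real (coeff q k) * z ^ k)"
      by (rule evc_sum) (simp add: N_def)
    also have "{..<N} = {..<n} \<union> {n..<N}" by (auto simp: N_def)
    also have "(\<Sum>k\<in>\<dots>. complex_of_real (coeff q k) * z ^ k)
        = (\<Sum>k<n. complex_of_real (coeff q k) * z ^ k) + (\<Sum>k\<in>{n..<N}. complex_of_real (coeff q k) * z ^ k)"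
      by (rule sum.union_disjoint) auto
    finally show ?thesis by simp
  qed
  then show ?thesis using tail_bigo[of "\<lambda>k. complex_of_real (coeff q k)" n N A] by simp
qed

lemma poly_lip:
  fixes q :: "complex poly"
  assumes "(a \<longlongrightarrow> 0) F" "(b \<longlongrightarrow> 0) F"
  shows "(\<lambda>x. poly q (a x) - poly q (b x)) \<in> O[F](\<lambda>x. a x - b x)"
proof -
  have "compact ((\<lambda>z. poly (pderiv q) z) ` cball 0 1)"
    by (intro compact_continuous_image continuous_on_poly continuous_on_id compact_cball)
  then obtain B where B: "\<And>z. z \<in> cball 0 1 \<Longrightarrow> norm (poly (pderiv q) z) \<le> B"
    by (meson bounded_iff compact_imp_bounded image_eqI)
  have lip: "norm (poly q x - poly q y) \<le> B * norm (x - y)" if "x \<in> cball 0 1" "y \<in> cball 0 1" for x y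
    by (rule field_differentiable_bound[of "cball 0 1" "poly q" "poly (pderiv q)"])
       (use that B in \<open>auto intro: has_field_derivative_at_within poly_DERIV\<close>)
  have "eventually (\<lambda>x. norm (a x) < 1) F"
    using tendsto_norm_zero[OF assms(1)] by (rule order_tendstoD) simp
  moreover have "eventually (\<lambda>x. norm (b x) < 1) F"
    using tendsto_norm_zero[OF assms(2)] by (rule order_tendstoD) simp
  ultimately have "eventually (\<lambda>x. norm (poly q (a x) - poly q (b x)) \<le> B * norm (a x - b x)) F"
    by eventually_elim (rule lip, auto simp: dist_0_norm)
  then show ?thesis by (intro bigoI) simp
qed

lemma iCplus_iff: "w \<in> iCplus \<longleftrightarrow> Re w < 0"
proof
  assume "w \<in> iCplus" then obtain z where "w = \<i> * z" "Im z > 0" by (auto simp: iCplus_def)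
  then show "Re w < 0" by simp
next
  assume "Re w < 0"
  then have "w = \<i> * (- \<i> * w)" "Im (- \<i> * w) > 0" by (auto simp: algebra_simps)
  then show "w \<in> iCplus" unfolding iCplus_def by blast
qed

lemma norm_le_norm_one_minus:
  fixes u :: complex assumes "Re u \<le> 0"
  shows "norm u \<le> norm (1 - u)"
proof -
  have "(Re u)^2 + (Im u)^2 \<le> (Re (1 - u))^2 + (Im (1 - u))^2"
    using assms by (simp add: power2_eq_square algebra_simps) 
  then show ?thesis unfolding cmod_def by (rule real_sqrt_le_mono)
qed

lemma den_ne0:
  fixes w :: complex assumes "Re w < 0" "x \<ge> 0"
  shows "1 - complex_of_real x * w \<noteq> 0"
proof
  assume "1 - complex_of_real x * w = 0"
  then have "Re (1 - complex_of_real x * w) = 0" by simp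
  then have "1 - x * Re w = 0" by simp
  moreover have "x * Re w \<le> 0" using assms by (simp add: mult_nonneg_nonpos)
  ultimately show False by simp
qed

lemma g_bound:
  fixes w :: complex assumes "Re w < 0" "x \<ge> 0"
  shows "norm (complex_of_real x * w / (1 - complex_of_real x * w)) \<le> 1"
proof -
  have "Re (complex_of_real x * w) \<le> 0" using assms by (simp add: mult_nonneg_nonpos)
  then have "norm (complex_of_real x * w) \<le> norm (1 - complex_of_real x * w)"
    by (rule norm_le_norm_one_minus)
  moreover have "norm (1 - complex_of_real x * w) > 0" using den_ne0[OF assms] by simp
  ultimately show ?thesis by (simp add: norm_divide divide_le_eq_1)
qed

lemma geom_identity:
  fixes u :: complex assumes "u \<noteq> 1"
  shows "u / (1 - u) - (\<Sum>k\<in>{1..n}. u ^ k) = u ^ n * (u / (1 - u))"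
proof (induction n)
  case 0 then show ?case by simp
next
  case (Suc n)
  have "1 - u \<noteq> 0" using assms by simp
  have "u / (1 - u) - (\<Sum>k\<in>{1..Suc n}. u ^ k) = (u / (1 - u) - (\<Sum>k\<in>{1..n}. u ^ k)) - u ^ Suc n"
    by simp
  also have "\<dots> = u ^ n * (u / (1 - u)) - u ^ Suc n" using Suc by simp
  also have "\<dots> = u ^ Suc n * (u / (1 - u))"
    using \<open>1 - u \<noteq> 0\<close> by (simp add: field_simps)
  finally show ?case .
qed

lemma lower_pt:
  fixes w :: complex and x e :: real
  assumes "Re w < 0" "x \<ge> 0" "e > 0" "norm w \<ge> e"
  shows "(x * e)^2 / (1 + x * e)^2 \<le> - Re (complex_of_real x * w / (1 - complex_of_real x * w))"
proof -
  define u where "u = complex_of_real x * w"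
  define r where "r = norm u"
  have r: "r = x * norm w" using assms by (simp add: r_def u_def norm_mult)
  have a: "Re u \<le> 0" using assms by (simp add: u_def mult_nonneg_nonpos)
  have "1 \<le> 1 - Re u" using a by simp
  then have "1 \<le> (1 - Re u)^2" by (rule one_le_power)
  then have den: "(1 - Re u)^2 + (Im u)^2 > 0" by (smt (verit) zero_le_power2)
  have nr: "(Re u)^2 + (Im u)^2 = r^2" unfolding r_def cmod_def by simp
  have "- Re (u / (1 - u)) = - (Re u * (1 - Re u) - Im u * Im u) / ((1 - Re u)^2 + (Im u)^2)"
    unfolding Re_divide by (simp add: minus_divide_left)
  also have "- (Re u * (1 - Re u) - Im u * Im u) = r^2 - Re u"
    using nr by (simp add: power2_eq_square algebra_simps)
  finally have eq: "- Re (u / (1 - u)) = (r^2 - Re u) / ((1 - Re u)^2 + (Im u)^2)" .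
  have 1: "(r^2 - Re u) / ((1 - Re u)^2 + (Im u)^2) \<ge> r^2 / ((1 - Re u)^2 + (Im u)^2)"
    using a den by (intro divide_right_mono) auto
  have "- Re u \<le> r" unfolding r_def by (metis abs_Re_le_cmod abs_le_D2)
  then have "(1 - Re u)^2 + (Im u)^2 \<le> (1 + r)^2"
    using nr by (simp add: power2_eq_square algebra_simps)
  then have 2: "r^2 / ((1 - Re u)^2 + (Im u)^2) \<ge> r^2 / (1 + r)^2"
    using den by (intro divide_left_mono mult_pos_pos) auto
  have xe: "0 \<le> x * e" "x * e \<le> r" using assms r by (auto intro: mult_left_mono)
  have "x * e * (1 + r) \<le> r * (1 + x * e)" using xe by (simp add: algebra_simps)
  then have "(x * e) / (1 + x * e) \<le> r / (1 + r)"
  proof -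
    have p1: "1 + x * e > 0" "1 + r > 0" using xe by auto
    show ?thesis using p1 \<open>x * e * (1 + r) \<le> r * (1 + x * e)\<close> by (simp add: field_simps)
  qed
  then have "((x * e) / (1 + x * e))^2 \<le> (r / (1 + r))^2"
    using xe by (intro power_mono) auto
  then have 3: "r^2 / (1 + r)^2 \<ge> (x * e)^2 / (1 + x * e)^2" by (simp add: power_divide)
  show ?thesis using eq 1 2 3 unfolding u_def by linarith
qed

locale rho_setting =
  fixes \<rho> :: "real measure" and p :: nat
  assumes ps: "prob_space \<rho>"
    and sets_rho: "sets \<rho> = sets borel"
    and nonneg: "AE x in \<rho>. x \<ge> 0"
    and nd: "\<rho> \<noteq> return borel 0"
    and p2: "p \<ge> 2"
    and integ: "\<And>k. k \<le> p \<Longrightarrow> integrable \<rho> (\<lambda>x. x ^ k)"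
begin

lemma space_rho: "space \<rho> = UNIV"
  using sets_eq_imp_space_eq[OF sets_rho] by simp

lemma bm: assumes "f \<in> borel_measurable borel" shows "f \<in> borel_measurable \<rho>"
  using assms by (simp add: measurable_cong_sets[OF sets_rho refl])

lemma AE_zero_False:
  assumes "AE x in \<rho>. x = 0"
  shows False
proof -
  have "\<rho> = return borel 0"
  proof (rule measure_eqI)
    show "sets \<rho> = sets (return borel 0)" using sets_rho by simp
  next
    fix A assume A: "A \<in> sets \<rho>"
    then have Ab: "A \<in> sets borel" using sets_rho by simp
    show "emeasure \<rho> A = emeasure (return borel 0) A"
    proof (cases "0 \<in> A")
      case True
      have "AE x in \<rho>. x \<in> A" using assms by eventually_elim (use True in auto)
      then have "emeasure \<rho> A = 1" using prob_space.emeasure_eq_1_AE[OF ps] A by simp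
      then show ?thesis using Ab True by simp
    next
      case False
      have "AE x in \<rho>. \<not> x \<in> A" using assms by eventually_elim (use False in auto)
      then have "emeasure \<rho> {x\<in>space \<rho>. x \<in> A} = 0" by (rule emeasure_eq_0_AE)
      then have "emeasure \<rho> A = 0" using space_rho by simp
      then show ?thesis using Ab False by simp
    qed
  qed
  then show False using nd by simp
qed

lemma m1_pos: "moment \<rho> 1 > 0"
proof -
  have int1: "integrable \<rho> (\<lambda>x. x)" using integ[of 1] p2 by simp
  have ge: "moment \<rho> 1 \<ge> 0" unfolding moment_def
    by (rule integral_nonneg_AE) (use nonneg in simp)
  show ?thesis
  proof (rule ccontr)
    assume "\<not> ?thesis"
    then have "integral\<^sup>L \<rho> (\<lambda>x. x) = 0" using ge by (simp add: moment_def)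
    then have "AE x in \<rho>. x = 0" using integral_nonneg_eq_0_iff_AE[OF int1 nonneg] by simp
    then show False by (rule AE_zero_False)
  qed
qed

definition g :: "complex \<Rightarrow> real \<Rightarrow> complex" where
  "g w x = complex_of_real x * w / (1 - complex_of_real x * w)"

lemma g_meas[measurable]: "g w \<in> borel_measurable \<rho>"
  unfolding g_def by (intro bm) measurable

lemma g_integrable: assumes "Re w < 0" shows "integrable \<rho> (g w)"
proof -
  interpret finite_measure \<rho> using ps by (simp add: prob_space_def)
  show ?thesis
  proof (rule integrable_const_bound[where B=1])
    show "AE x in \<rho>. norm (g w x) \<le> 1" using nonneg
      by eventually_elim (unfold g_def, rule g_bound[OF assms])
    show "g w \<in> borel_measurable \<rho>" by (rule g_meas)
  qed
qed

lemma Psi_g: "Psi \<rho> w = integral\<^sup>L \<rho> (g w)"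
  unfolding Psi_def g_def[abs_def] by simp

end

lemma ev_within: "(\<And>w. w \<in> S \<Longrightarrow> w \<noteq> a \<Longrightarrow> P w) \<Longrightarrow> eventually P (at a within S)"
  by (simp add: eventually_at_filter)

context rho_setting
begin

definition Pr :: "real poly" where "Pr = (\<Sum>k\<in>{1..p}. monom (moment \<rho> k) k)"

lemma coeff_Pr: "coeff Pr k = (if 1 \<le> k \<and> k \<le> p then moment \<rho> k else 0)"
  by (simp add: Pr_def coeff_sum coeff_monom)

lemma deg_Pr: "degree Pr < Suc p"
  by (rule degree_lessI) (auto simp: coeff_Pr)

lemma evc_Pr: "evc Pr w = (\<Sum>k\<in>{1..p}. complex_of_real (moment \<rho> k) * w ^ k)"
proof -
  have "evc Pr w = (\<Sum>k<Suc p. complex_of_real (coeff Pr k) * w ^ k)"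
    by (rule evc_sum[OF deg_Pr])
  also have "\<dots> = (\<Sum>k\<in>{1..p}. complex_of_real (coeff Pr k) * w ^ k)"
    by (rule sum.mono_neutral_right) (auto simp: coeff_Pr)
  also have "\<dots> = (\<Sum>k\<in>{1..p}. complex_of_real (moment \<rho> k) * w ^ k)"
    by (rule sum.cong) (auto simp: coeff_Pr)
  finally show ?thesis .
qed

definition J :: "complex \<Rightarrow> complex" where
  "J w = (\<integral>x. complex_of_real (x ^ p) * g w x \<partial>\<rho>)"

lemma integ_c: "k \<le> p \<Longrightarrow> integrable \<rho> (\<lambda>x. complex_of_real (x ^ k) * c)"
  using integ[of k] by (intro integrable_mult_left integrable_of_real) auto

lemma Psi_expand:
  assumes w: "Re w < 0"
  shows "Psi \<rho> w - evc Pr w = w ^ p * J w"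
proof -
  have "evc Pr w = (\<Sum>k\<in>{1..p}. \<integral>x. complex_of_real (x ^ k) * w ^ k \<partial>\<rho>)"
    unfolding evc_Pr by (intro sum.cong refl) (simp only: moment_def integral_mult_left_zero integral_complex_of_real)
  also have "\<dots> = (\<integral>x. (\<Sum>k\<in>{1..p}. complex_of_real (x ^ k) * w ^ k) \<partial>\<rho>)"
    by (rule Bochner_Integration.integral_sum[symmetric], rule integ_c) simp
  finally have e1: "evc Pr w = (\<integral>x. (\<Sum>k\<in>{1..p}. complex_of_real (x ^ k) * w ^ k) \<partial>\<rho>)" .
  have "Psi \<rho> w - evc Pr w = (\<integral>x. g w x - (\<Sum>k\<in>{1..p}. complex_of_real (x ^ k) * w ^ k) \<partial>\<rho>)"
    unfolding Psi_g e1 by (rule Bochner_Integration.integral_diff[symmetric], rule g_integrable[OF w], rule Bochner_Integration.integrable_sum, rule integ_c, simp)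
  also have "\<dots> = (\<integral>x. w ^ p * (complex_of_real (x ^ p) * g w x) \<partial>\<rho>)"
  proof (rule integral_cong_AE)
    show "(\<lambda>x. g w x - (\<Sum>k\<in>{1..p}. complex_of_real (x ^ k) * w ^ k)) \<in> borel_measurable \<rho>"
      by (intro bm) (unfold g_def, measurable)
    show "(\<lambda>x. w ^ p * (complex_of_real (x ^ p) * g w x)) \<in> borel_measurable \<rho>"
      by (intro bm) (unfold g_def, measurable)
    show "AE x in \<rho>. g w x - (\<Sum>k\<in>{1..p}. complex_of_real (x ^ k) * w ^ k) = w ^ p * (complex_of_real (x ^ p) * g w x)"
      using nonneg
    proof eventually_elim
      case (elim x)
      have ne: "complex_of_real x * w \<noteq> 1" using den_ne0[OF w elim] by auto
      have "g w x - (\<Sum>k\<in>{1..p}. complex_of_real (x ^ k) * w ^ k)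
          = g w x - (\<Sum>k\<in>{1..p}. (complex_of_real x * w) ^ k)"
        by (simp add: power_mult_distrib)
      also have "\<dots> = (complex_of_real x * w) ^ p * g w x"
        unfolding g_def by (rule geom_identity[OF ne])
      finally show ?case by (simp add: power_mult_distrib)
    qed
  qed
  also have "\<dots> = w ^ p * J w" by (simp add: J_def)
  finally show ?thesis .
qed

lemma J_tendsto: "(J \<longlongrightarrow> 0) (at 0 within iCplus)"
  unfolding tendsto_at_iff_sequentially
proof (intro allI impI)
  fix X :: "nat \<Rightarrow> complex"
  assume X: "\<forall>i. X i \<in> iCplus - {0}" and lim: "X \<longlonglongrightarrow> 0"
  have ReX: "Re (X i) < 0" for i using X iCplus_iff by auto
  have "(\<lambda>i. \<integral>x. complex_of_real (x ^ p) * g (X i) x \<partial>\<rho>) \<longlonglongrightarrow> (\<integral>x. 0 \<partial>\<rho>)"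
  proof (rule integral_dominated_convergence[where w="\<lambda>x. \<bar>x ^ p\<bar>"])
    show "(\<lambda>x. 0::complex) \<in> borel_measurable \<rho>" by simp
    show "(\<lambda>x. complex_of_real (x ^ p) * g (X i) x) \<in> borel_measurable \<rho>" for i
      by (intro bm) (unfold g_def, measurable)
    show "integrable \<rho> (\<lambda>x. \<bar>x ^ p\<bar>)" using integ[of p] by auto
    show "AE x in \<rho>. (\<lambda>i. complex_of_real (x ^ p) * g (X i) x) \<longlonglongrightarrow> 0"
    proof (rule AE_I2)
      fix x
      have "(\<lambda>i. complex_of_real (x ^ p) * (complex_of_real x * X i / (1 - complex_of_real x * X i)))
         \<longlonglongrightarrow> complex_of_real (x ^ p) * (complex_of_real x * 0 / (1 - complex_of_real x * 0))"
        by (intro tendsto_intros lim) simp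
      then show "(\<lambda>i. complex_of_real (x ^ p) * g (X i) x) \<longlonglongrightarrow> 0" by (simp add: g_def)
    qed
    show "AE x in \<rho>. norm (complex_of_real (x ^ p) * g (X i) x) \<le> \<bar>x ^ p\<bar>" for i
      using nonneg
    proof eventually_elim
      case (elim x)
      have "norm (g (X i) x) \<le> 1" unfolding g_def by (rule g_bound[OF ReX elim])
      then have "\<bar>x ^ p\<bar> * norm (g (X i) x) \<le> \<bar>x ^ p\<bar> * 1" by (intro mult_left_mono) auto
      then show ?case by (simp add: norm_mult norm_power power_abs)
    qed
  qed
  then show "(J \<circ> X) \<longlonglongrightarrow> 0" by (simp add: J_def comp_def)
qed

lemma L2: "(\<lambda>w. Psi \<rho> w - evc Pr w) \<in> o[at 0 within iCplus](\<lambda>w. w ^ p)"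
proof (rule smalloI_tendsto)
  have "eventually (\<lambda>w. J w = (Psi \<rho> w - evc Pr w) / w ^ p) (at 0 within iCplus)"
    by (rule ev_within) (simp add: Psi_expand iCplus_iff)
  then show "((\<lambda>w. (Psi \<rho> w - evc Pr w) / w ^ p) \<longlongrightarrow> 0) (at 0 within iCplus)"
    by (rule Lim_transform_eventually[OF J_tendsto])
  show "eventually (\<lambda>w. w ^ p \<noteq> 0) (at 0 within iCplus)"
    by (rule ev_within) simp
qed

definition cc :: "real \<Rightarrow> real" where
  "cc e = (\<integral>x. (x * e)^2 / (1 + x * e)^2 \<partial>\<rho>)"

lemma cc_integrable: "integrable \<rho> (\<lambda>x. (x * e)^2 / (1 + x * e)^2)" if "e > 0"
proof -
  interpret finite_measure \<rho> using ps by (simp add: prob_space_def)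
  show ?thesis
  proof (rule integrable_const_bound[where B=1])
    show "AE x in \<rho>. norm ((x * e)^2 / (1 + x * e)^2) \<le> 1"
      using nonneg
    proof eventually_elim
      case (elim x)
      have "0 \<le> x * e" using elim that by simp
      then have "(x * e)^2 \<le> (1 + x * e)^2" by (intro power_mono) auto
      moreover have "(1 + x * e)^2 > 0" using \<open>0 \<le> x * e\<close> by simp
      ultimately show ?case by simp
    qed
    show "(\<lambda>x. (x * e)^2 / (1 + x * e)^2) \<in> borel_measurable \<rho>" by (intro bm) measurable
  qed
qed

lemma cc_pos: assumes "e > 0" shows "cc e > 0"
proof -
  have nn: "AE x in \<rho>. 0 \<le> (x * e)^2 / (1 + x * e)^2" by simp
  have ge: "cc e \<ge> 0" unfolding cc_def by (rule integral_nonneg_AE[OF nn])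
  show ?thesis
  proof (rule ccontr)
    assume "\<not> ?thesis"
    then have "cc e = 0" using ge by simp
    then have "AE x in \<rho>. (x * e)^2 / (1 + x * e)^2 = 0"
      using integral_nonneg_eq_0_iff_AE[OF cc_integrable[OF assms] nn] by (simp add: cc_def)
    then have "AE x in \<rho>. x = 0" using nonneg
    proof eventually_elim
      case (elim x)
      have "1 + x * e > 0" using elim assms by (smt (verit) mult_nonneg_nonneg)
      then show "x = 0" using elim assms by simp
    qed
    then show False by (rule AE_zero_False)
  qed
qed

lemma Psi_lower:
  assumes w: "Re w < 0" and e: "e > 0" "norm w \<ge> e"
  shows "cc e \<le> norm (Psi \<rho> w)"
proof -
  have "cc e \<le> (\<integral>x. - Re (g w x) \<partial>\<rho>)"
    unfolding cc_def
  proof (rule integral_mono_AE)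
    show "integrable \<rho> (\<lambda>x. (x * e)^2 / (1 + x * e)^2)" by (rule cc_integrable[OF e(1)])
    show "integrable \<rho> (\<lambda>x. - Re (g w x))"
      by (intro integrable_minus integrable_bounded_linear[OF bounded_linear_Re] g_integrable[OF w])
    show "AE x in \<rho>. (x * e)^2 / (1 + x * e)^2 \<le> - Re (g w x)"
      using nonneg by eventually_elim (unfold g_def, rule lower_pt[OF w _ e])
  qed
  also have "\<dots> = - Re (Psi \<rho> w)"
    unfolding Psi_g
    by (simp add: integral_bounded_linear[OF bounded_linear_Re g_integrable[OF w]])
  also have "\<dots> \<le> norm (Psi \<rho> w)" by (metis abs_Re_le_cmod abs_le_D2)
  finally show ?thesis .
qed

lemma Psi_inv_in: "z \<in> Ddom \<rho> \<Longrightarrow> Psi_inv \<rho> z \<in> iCplus"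
  unfolding Psi_inv_def Ddom_def by (rule inv_into_into)

lemma Psi_Psi_inv: "z \<in> Ddom \<rho> \<Longrightarrow> Psi \<rho> (Psi_inv \<rho> z) = z"
  unfolding Psi_inv_def Ddom_def by (rule f_inv_into_f)

lemma L3: "filterlim (Psi_inv \<rho>) (at 0 within iCplus) (at 0 within Ddom \<rho>)"
proof (rule filterlim_at_withinI)
  show "eventually (\<lambda>z. Psi_inv \<rho> z \<in> iCplus - {0}) (at 0 within Ddom \<rho>)"
    by (rule ev_within) (auto dest: Psi_inv_in simp: iCplus_iff)
  show "filterlim (Psi_inv \<rho>) (nhds 0) (at 0 within Ddom \<rho>)"
  proof (rule tendstoI)
    fix e :: real assume e: "e > 0"
    have "((\<lambda>z::complex. norm z) \<longlongrightarrow> 0) (at 0 within Ddom \<rho>)"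
      by (intro tendsto_norm_zero tendsto_ident_at)
    then have "eventually (\<lambda>z. norm z < cc e) (at 0 within Ddom \<rho>)"
      using cc_pos[OF e] by (rule order_tendstoD)
    moreover have "eventually (\<lambda>z. z \<in> Ddom \<rho>) (at 0 within Ddom \<rho>)"
      by (rule ev_within) simp
    ultimately show "eventually (\<lambda>z. dist (Psi_inv \<rho> z) 0 < e) (at 0 within Ddom \<rho>)"
    proof eventually_elim
      case (elim z)
      show ?case
      proof (rule ccontr)
        assume "\<not> ?case"
        then have "norm (Psi_inv \<rho> z) \<ge> e" by simp
        then have "cc e \<le> norm (Psi \<rho> (Psi_inv \<rho> z))"
          using Psi_inv_in[OF elim(2)] e by (intro Psi_lower) (auto simp: iCplus_iff)
        then show False using Psi_Psi_inv[OF elim(2)] elim(1) by simp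
      qed
    qed
  qed
qed

end

lemma pow_small:
  assumes "p \<ge> 1"
  shows "(\<lambda>z::complex. z ^ p) \<in> o[at 0 within S](\<lambda>z. z ^ (p - 1))"
proof (rule smalloI_tendsto)
  have "eventually (\<lambda>z::complex. z = z ^ p / z ^ (p - 1)) (at 0 within S)"
  proof (rule ev_within)
    fix z :: complex assume "z \<noteq> 0"
    moreover have "z ^ p = z * z ^ (p - 1)" using assms by (cases p) auto
    ultimately show "z = z ^ p / z ^ (p - 1)" by simp
  qed
  then show "((\<lambda>z::complex. z ^ p / z ^ (p - 1)) \<longlongrightarrow> 0) (at 0 within S)"
    by (rule Lim_transform_eventually[OF tendsto_ident_at])
  show "eventually (\<lambda>z::complex. z ^ (p - 1) \<noteq> 0) (at 0 within S)"
    by (rule ev_within) simp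
qed

lemma pow_k: "k \<ge> 1 \<Longrightarrow> (w::complex) ^ k = w * w ^ (k - 1)"
  by (cases k) auto

lemma sum_zero_pow: "(\<Sum>k\<in>{1..p}. c k * (0::complex) ^ (k - 1)) = (if p \<ge> 1 then c 1 else 0)"
proof -
  have "(\<Sum>k\<in>{1..p}. c k * (0::complex) ^ (k - 1)) = (\<Sum>k\<in>{1..p}. if k = 1 then c k else 0)"
    by (rule sum.cong) auto
  also have "\<dots> = (if p \<ge> 1 then c 1 else 0)" by (simp add: sum.delta)
  finally show ?thesis .
qed

context rho_setting
begin

definition A :: "real fps" where "A = fps_of_poly Pr"

lemma A_nth: "(fps_nth A k) = (if 1 \<le> k \<and> k \<le> p then moment \<rho> k else 0)"
  unfolding A_def fps_of_poly_nth by (rule coeff_Pr)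

lemma A0: "(fps_nth A 0) = 0"
  unfolding A_nth by simp

lemma A1: "(fps_nth A 1) = moment \<rho> 1"
  unfolding A_nth using p2 by simp

lemma A1': "fps_nth A (Suc 0) = moment \<rho> 1"
  using A1 by simp

lemma A2: "(fps_nth A 2) = moment \<rho> 2"
  unfolding A_nth using p2 by simp

definition Qr :: "real poly" where "Qr = truncate_fps (Suc p) (fps_inv A)"

lemma coeff_Qr: "coeff Qr k = (if k < Suc p then (fps_nth (fps_inv A) k) else 0)"
  by (simp add: Qr_def coeff_truncate_fps)

lemma deg_Qr: "degree Qr < Suc p"
  unfolding Qr_def by (rule degree_truncate_fps) simp

lemma m1_ne: "moment \<rho> 1 \<noteq> 0" using m1_pos by simp

lemma inv0: "(fps_nth (fps_inv A) 0) = 0"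
  by (simp add: fps_inv_def)

lemma inv1: "(fps_nth (fps_inv A) 1) = 1 / moment \<rho> 1"
  by (simp add: fps_inv_def A0 A1' One_nat_def)

lemma inv2: "(fps_nth (fps_inv A) 2) = - moment \<rho> 2 / moment \<rho> 1 ^ 3"
proof -
  have "(fps_nth (fps_inv A) 2) = compinv A (Suc (Suc 0))" by (simp add: fps_inv_def numeral_2_eq_2)
  also have "\<dots> = (0 - (compinv A 0 * (fps_nth (A ^ 0) 2) + compinv A 1 * (fps_nth (A ^ 1) 2))) / ((fps_nth A 1)) ^ 2"
    by (simp add: numeral_2_eq_2 One_nat_def)
  also have "\<dots> = (0 - (1 / moment \<rho> 1) * moment \<rho> 2) / moment \<rho> 1 ^ 2"
    using inv1 p2 by (simp add: A1 A2 A_nth fps_inv_def numeral_2_eq_2)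
  also have "\<dots> = - moment \<rho> 2 / moment \<rho> 1 ^ 3"
    using m1_ne by (simp add: field_simps power3_eq_cube power2_eq_square)
  finally show ?thesis .
qed

lemma comp_coeff:
  assumes "k \<le> p"
  shows "coeff (pcompose Qr Pr) k = (if k = 1 then 1 else 0)"
proof -
  have "coeff (pcompose Qr Pr) k = fps_nth (fps_of_poly (pcompose Qr Pr)) k" by simp
  also have "\<dots> = (fps_nth (fps_of_poly Qr oo A) k)"
    by (simp add: fps_of_poly_pcompose coeff_Pr A_def)
  also have "\<dots> = (\<Sum>i=0..k. (fps_nth (fps_of_poly Qr) i) * (fps_nth (A ^ i) k))" by (rule fps_compose_nth)
  also have "\<dots> = (\<Sum>i=0..k. (fps_nth (fps_inv A) i) * (fps_nth (A ^ i) k))"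
    using assms by (intro sum.cong) (auto simp: coeff_Qr)
  also have "\<dots> = (fps_nth (fps_inv A oo A) k)" by (rule fps_compose_nth[symmetric])
  also have "\<dots> = (fps_nth fps_X k)" using fps_inv[OF A0] A1 m1_ne by simp
  finally show ?thesis by simp
qed

abbreviation "G \<equiv> at (0::complex) within iCplus"
abbreviation "F \<equiv> at (0::complex) within Ddom \<rho>"

lemma Psi_over_w: "((\<lambda>w. Psi \<rho> w / w) \<longlongrightarrow> complex_of_real (moment \<rho> 1)) G"
proof -
  have ev: "eventually (\<lambda>w. w ^ (p - 1) * J w + (\<Sum>k\<in>{1..p}. complex_of_real (moment \<rho> k) * w ^ (k - 1))
       = Psi \<rho> w / w) G"
  proof (rule ev_within)
    fix w :: complex assume w: "w \<in> iCplus" "w \<noteq> 0"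
    have "Psi \<rho> w - evc Pr w = w ^ p * J w" using Psi_expand[of w] w by (simp add: iCplus_iff)
    then have "Psi \<rho> w = evc Pr w + w ^ p * J w" by (simp add: diff_eq_eq add.commute)
    also have "evc Pr w = w * (\<Sum>k\<in>{1..p}. complex_of_real (moment \<rho> k) * w ^ (k - 1))"
      unfolding evc_Pr sum_distrib_left
      by (intro sum.cong refl) (simp add: pow_k[of _ w] mult_ac)
    also have "w ^ p = w * w ^ (p - 1)" using p2 by (intro pow_k) simp
    finally show "w ^ (p - 1) * J w + (\<Sum>k\<in>{1..p}. complex_of_real (moment \<rho> k) * w ^ (k - 1)) = Psi \<rho> w / w"
      using w by (simp add: field_simps)
  qed
  have "((\<lambda>w. w ^ (p - 1) * J w + (\<Sum>k\<in>{1..p}. complex_of_real (moment \<rho> k) * w ^ (k - 1)))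
      \<longlongrightarrow> 0 ^ (p - 1) * 0 + (\<Sum>k\<in>{1..p}. complex_of_real (moment \<rho> k) * 0 ^ (k - 1))) G"
    by (intro tendsto_add tendsto_mult tendsto_power tendsto_sum J_tendsto tendsto_ident_at tendsto_const)
  also have "0 ^ (p - 1) * 0 + (\<Sum>k\<in>{1..p}. complex_of_real (moment \<rho> k) * 0 ^ (k - 1)) = complex_of_real (moment \<rho> 1)"
    by (subst sum_zero_pow) (use p2 in simp)
  finally show ?thesis using ev by (rule Lim_transform_eventually)
qed

lemma Psi_tendsto0: "(Psi \<rho> \<longlongrightarrow> 0) G"
proof -
  have "((\<lambda>w. Psi \<rho> w / w * w) \<longlongrightarrow> complex_of_real (moment \<rho> 1) * 0) G"
    by (intro tendsto_mult Psi_over_w tendsto_ident_at)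
  moreover have "eventually (\<lambda>w. Psi \<rho> w / w * w = Psi \<rho> w) G" by (rule ev_within) simp
  ultimately show ?thesis by (simp add: Lim_transform_eventually)
qed

lemma evcPr_tendsto0: "(evc Pr \<longlongrightarrow> 0) G"
proof -
  have "((\<lambda>w. Psi \<rho> w - w ^ p * J w) \<longlongrightarrow> 0 - 0 ^ p * 0) G"
    by (intro tendsto_diff tendsto_mult tendsto_power Psi_tendsto0 J_tendsto tendsto_ident_at)
  moreover have "eventually (\<lambda>w. Psi \<rho> w - w ^ p * J w = evc Pr w) G"
    by (rule ev_within) (simp add: iCplus_iff Psi_expand[symmetric])
  ultimately show ?thesis by (simp add: Lim_transform_eventually)
qed

lemma w_bigo: "(\<lambda>w. w ^ p) \<in> O[G](\<lambda>w. Psi \<rho> w ^ p)"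
proof (rule bigoI_tendsto)
  have ne: "eventually (\<lambda>w. Psi \<rho> w / w \<noteq> 0) G"
    using Psi_over_w by (rule tendsto_imp_eventually_ne) (use m1_ne in simp)
  have "((\<lambda>w. inverse (Psi \<rho> w / w) ^ p) \<longlongrightarrow> inverse (complex_of_real (moment \<rho> 1)) ^ p) G"
    by (intro tendsto_power tendsto_inverse Psi_over_w) (use m1_ne in simp)
  moreover have "eventually (\<lambda>w. inverse (Psi \<rho> w / w) ^ p = w ^ p / Psi \<rho> w ^ p) G"
    by (rule ev_within) (simp add: power_divide inverse_eq_divide)
  ultimately show "((\<lambda>w. w ^ p / Psi \<rho> w ^ p) \<longlongrightarrow> inverse (complex_of_real (moment \<rho> 1)) ^ p) G"
    by (simp add: Lim_transform_eventually)
  show "eventually (\<lambda>w. Psi \<rho> w ^ p \<noteq> 0) G"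
    using ne by eventually_elim simp
qed

definition Qc :: "complex poly" where "Qc = map_poly complex_of_real Qr"

lemma key_G: "(\<lambda>w. poly Qc (Psi \<rho> w) - w) \<in> o[G](\<lambda>w. Psi \<rho> w ^ p)"
proof -
  have E1: "(\<lambda>w. poly Qc (Psi \<rho> w) - poly Qc (evc Pr w)) \<in> O[G](\<lambda>w. Psi \<rho> w - evc Pr w)"
    by (rule poly_lip[OF Psi_tendsto0 evcPr_tendsto0])
  have E1': "(\<lambda>w. poly Qc (Psi \<rho> w) - poly Qc (evc Pr w)) \<in> o[G](\<lambda>w. w ^ p)"
    by (rule landau_o.big_small_trans[OF E1 L2])
  have sum1: "(\<Sum>k<Suc p. complex_of_real (coeff (pcompose Qr Pr) k) * w ^ k) = w" for w :: complex
  proof -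
    have "(\<Sum>k<Suc p. complex_of_real (coeff (pcompose Qr Pr) k) * w ^ k) = (\<Sum>k<Suc p. if k = 1 then w else 0)"
      by (rule sum.cong) (auto simp: comp_coeff)
    also have "\<dots> = w" using p2 by (simp add: sum.delta)
    finally show ?thesis .
  qed
  have E2: "(\<lambda>w. poly Qc (evc Pr w) - w) \<in> O[G](\<lambda>w. w ^ Suc p)"
  proof -
    have "(\<lambda>w. evc (pcompose Qr Pr) w - (\<Sum>k<Suc p. complex_of_real (coeff (pcompose Qr Pr) k) * w ^ k)) \<in> O[G](\<lambda>w. w ^ Suc p)"
      by (rule evc_tail)
    then have "(\<lambda>w. evc (pcompose Qr Pr) w - w) \<in> O[G](\<lambda>w. w ^ Suc p)" by (simp only: sum1)
    then show ?thesis by (simp only: evc_pcompose evc_def[of Qr] Qc_def[symmetric])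
  qed
  have E3: "(\<lambda>w::complex. w ^ Suc p) \<in> o[G](\<lambda>w. w ^ p)"
    using pow_small[of "Suc p" iCplus] by simp
  have E2': "(\<lambda>w. poly Qc (evc Pr w) - w) \<in> o[G](\<lambda>w. w ^ p)"
    by (rule landau_o.big_small_trans[OF E2 E3])
  have "(\<lambda>w. poly Qc (Psi \<rho> w) - w) \<in> o[G](\<lambda>w. w ^ p)"
    using sum_in_smallo(1)[OF E1' E2'] by simp
  then show ?thesis by (rule landau_o.small_big_trans[OF _ w_bigo])
qed

lemma key_F: "(\<lambda>z. poly Qc z - Psi_inv \<rho> z) \<in> o[F](\<lambda>z. z ^ p)"
proof -
  have 1: "(\<lambda>z. poly Qc (Psi \<rho> (Psi_inv \<rho> z)) - Psi_inv \<rho> z) \<in> o[F](\<lambda>z. Psi \<rho> (Psi_inv \<rho> z) ^ p)"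
    by (rule landau_o.small.compose[OF key_G L3])
  have ev: "eventually (\<lambda>z. Psi \<rho> (Psi_inv \<rho> z) = z) F"
    by (rule ev_within) (simp add: Psi_Psi_inv)
  have 2: "o[F](\<lambda>z. Psi \<rho> (Psi_inv \<rho> z) ^ p) = o[F](\<lambda>z. z ^ p)"
    by (rule landau_o.small.cong) (use ev in eventually_elim, simp)
  have ev2: "eventually (\<lambda>z. poly Qc (Psi \<rho> (Psi_inv \<rho> z)) - Psi_inv \<rho> z = poly Qc z - Psi_inv \<rho> z) F"
    using ev by eventually_elim simp
  show ?thesis using 1 unfolding 2 by (subst (asm) landau_o.small.in_cong[OF ev2])
qed

end

context rho_setting
begin

definition s :: "nat \<Rightarrow> real" where "s k = coeff Qr (Suc k) + coeff Qr k"

lemma s0: "s 0 = 1 / moment \<rho> 1"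
  using p2 by (simp add: s_def coeff_Qr inv0 inv1[unfolded One_nat_def])

lemma s1: "s 1 = 1 / moment \<rho> 1 - moment \<rho> 2 / moment \<rho> 1 ^ 3"
proof -
  have "s 1 = fps_nth (fps_inv A) 2 + fps_nth (fps_inv A) 1"
    using p2 by (simp add: s_def coeff_Qr numeral_2_eq_2)
  then show ?thesis unfolding inv1 inv2 by simp
qed

lemma Qc_eq: "poly Qc z = z * (\<Sum>k<p. complex_of_real (coeff Qr (Suc k)) * z ^ k)"
proof -
  have "poly Qc z = evc Qr z" by (simp add: Qc_def evc_def)
  also have "\<dots> = (\<Sum>k<Suc p. complex_of_real (coeff Qr k) * z ^ k)" by (rule evc_sum[OF deg_Qr])
  also have "\<dots> = complex_of_real (coeff Qr 0) * z ^ 0 + (\<Sum>k<p. complex_of_real (coeff Qr (Suc k)) * z ^ Suc k)"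
    by (rule sum.lessThan_Suc_shift)
  also have "\<dots> = z * (\<Sum>k<p. complex_of_real (coeff Qr (Suc k)) * z ^ k)"
    by (simp add: coeff_Qr inv0 sum_distrib_left mult_ac)
  finally show ?thesis .
qed

lemma S_identity:
  assumes "z \<noteq> 0"
  shows "(z + 1) * poly Qc z / z = (\<Sum>k<p. complex_of_real (s k) * z ^ k) + complex_of_real (coeff Qr p) * z ^ p"
proof -
  define T where "T = (\<Sum>k<p. complex_of_real (coeff Qr (Suc k)) * z ^ k)"
  have "(\<Sum>k<p. complex_of_real (coeff Qr k) * z ^ k) + complex_of_real (coeff Qr p) * z ^ p
      = (\<Sum>k<Suc p. complex_of_real (coeff Qr k) * z ^ k)" by simp
  also have "\<dots> = evc Qr z" by (rule evc_sum[OF deg_Qr, symmetric])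
  also have "\<dots> = z * T" using Qc_eq by (simp add: Qc_def evc_def T_def)
  finally have 1: "(\<Sum>k<p. complex_of_real (coeff Qr k) * z ^ k) + complex_of_real (coeff Qr p) * z ^ p = z * T" .
  have "(\<Sum>k<p. complex_of_real (s k) * z ^ k) = T + (\<Sum>k<p. complex_of_real (coeff Qr k) * z ^ k)"
    by (simp add: s_def T_def distrib_right sum.distrib)
  then have R: "(\<Sum>k<p. complex_of_real (s k) * z ^ k) + complex_of_real (coeff Qr p) * z ^ p = T + z * T"
    using 1 by (simp add: add.assoc)
  have PQ: "poly Qc z = z * T" unfolding T_def by (rule Qc_eq)
  have "(z + 1) * poly Qc z / z = T + z * T"
    using assms PQ by (simp add: field_simps)
  then show ?thesis using R by simp
qed

lemma S_part: "(\<lambda>z. S_transform \<rho> z - (\<Sum>k<p. complex_of_real (s k) * z ^ k)) \<in> o[F](\<lambda>z. z ^ (p - 1))"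
proof (rule smalloI_tendsto)
  define c where "c = complex_of_real (coeff Qr p)"
  have ev: "eventually (\<lambda>z. c * z - (z + 1) * ((poly Qc z - Psi_inv \<rho> z) / z ^ p)
       = (S_transform \<rho> z - (\<Sum>k<p. complex_of_real (s k) * z ^ k)) / z ^ (p - 1)) F"
  proof (rule ev_within)
    fix z :: complex assume z: "z \<noteq> 0"
    define D where "D = poly Qc z - Psi_inv \<rho> z"
    have zp: "z ^ p = z * z ^ (p - 1)" using p2 by (intro pow_k) simp
    have PD: "poly Qc z - D = Psi_inv \<rho> z" by (simp add: D_def)
    have "S_transform \<rho> z = (z + 1) * (poly Qc z - D) / z" by (simp add: S_transform_def PD)
    also have "\<dots> = (z + 1) * poly Qc z / z - (z + 1) * D / z" by (simp add: right_diff_distrib diff_divide_distrib)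
    also have "\<dots> = (\<Sum>k<p. complex_of_real (s k) * z ^ k) + c * z ^ p - (z + 1) * D / z"
      using S_identity[OF z] by (simp add: c_def)
    finally have E: "S_transform \<rho> z - (\<Sum>k<p. complex_of_real (s k) * z ^ k) = c * z ^ p - (z + 1) * D / z"
      by simp
    have zq: "z ^ (p - 1) \<noteq> 0" using z by simp
    have "(S_transform \<rho> z - (\<Sum>k<p. complex_of_real (s k) * z ^ k)) / z ^ (p - 1)
        = (c * (z * z ^ (p - 1)) - (z + 1) * D / z) / z ^ (p - 1)" unfolding E zp ..
    also have "\<dots> = c * z - (z + 1) * (D / (z * z ^ (p - 1)))"
      using z zq by (simp add: field_simps)
    finally show "c * z - (z + 1) * ((poly Qc z - Psi_inv \<rho> z) / z ^ p)
       = (S_transform \<rho> z - (\<Sum>k<p. complex_of_real (s k) * z ^ k)) / z ^ (p - 1)"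
      unfolding D_def[symmetric] zp by simp
  qed
  have "((\<lambda>z. c * z - (z + 1) * ((poly Qc z - Psi_inv \<rho> z) / z ^ p)) \<longlongrightarrow> c * 0 - (0 + 1) * 0) F"
    by (intro tendsto_diff tendsto_mult tendsto_add tendsto_const tendsto_ident_at smalloD_tendsto[OF key_F])
  then show "((\<lambda>z. (S_transform \<rho> z - (\<Sum>k<p. complex_of_real (s k) * z ^ k)) / z ^ (p - 1)) \<longlongrightarrow> 0) F"
    using ev by (simp add: Lim_transform_eventually)
  show "eventually (\<lambda>z. z ^ (p - 1) \<noteq> 0) F" by (rule ev_within) simp
qed

end

context rho_setting
begin

definition Sr :: "real poly" where "Sr = (\<Sum>k<p. monom (s k) k)"

lemma coeff_Sr: "coeff Sr k = (if k < p then s k else 0)"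
  by (simp add: Sr_def coeff_sum coeff_monom)

lemma deg_Sr: "degree Sr < p"
  using p2 by (intro degree_lessI) (auto simp: coeff_Sr)

lemma evc_Sr: "evc Sr u = (\<Sum>k<p. complex_of_real (s k) * u ^ k)"
  unfolding evc_sum[OF deg_Sr] by (intro sum.cong refl) (simp add: coeff_Sr)

definition Tr :: "real poly" where "Tr = (\<Sum>k\<in>{1..<p}. monom 1 k)"

lemma coeff_Tr: "coeff Tr k = (if 1 \<le> k \<and> k < p then 1 else 0)"
  by (simp add: Tr_def coeff_sum coeff_monom)

lemma deg_Tr: "degree Tr < p"
  using p2 by (intro degree_lessI) (auto simp: coeff_Tr)

lemma evc_Tr: "evc Tr z = (\<Sum>k\<in>{1..<p}. z ^ k)"
proof -
  have "evc Tr z = (\<Sum>k<p. complex_of_real (coeff Tr k) * z ^ k)" by (rule evc_sum[OF deg_Tr])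
  also have "\<dots> = (\<Sum>k\<in>{1..<p}. complex_of_real (coeff Tr k) * z ^ k)"
    by (rule sum.mono_neutral_right) (auto simp: coeff_Tr)
  also have "\<dots> = (\<Sum>k\<in>{1..<p}. z ^ k)" by (rule sum.cong) (auto simp: coeff_Tr)
  finally show ?thesis .
qed

definition sg :: "nat \<Rightarrow> real" where "sg k = coeff (pcompose Sr Tr) k"

lemma sg0: "sg 0 = s 0"
  using p2 by (simp add: sg_def coeff_pcompose_0 coeff_Tr poly_0_coeff_0 coeff_Sr)

lemma sg1: "sg 1 = s 1"
proof -
  have T0: "coeff Tr 0 = 0" by (simp add: coeff_Tr)
  have "sg 1 = fps_nth (fps_of_poly Sr oo fps_of_poly Tr) 1"
    unfolding sg_def by (simp add: fps_of_poly_pcompose[OF T0, symmetric])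
  also have "\<dots> = (\<Sum>i=0..1. fps_nth (fps_of_poly Sr) i * fps_nth (fps_of_poly Tr ^ i) 1)" by (rule fps_compose_nth)
  also have "\<dots> = s 1"
    using p2 by (simp add: coeff_Sr coeff_Tr)
  finally show ?thesis .
qed

abbreviation "H \<equiv> at (0::complex) within {z. z \<noteq> 1 \<and> z / (1 - z) \<in> Ddom \<rho>}"

lemma Lh: "filterlim (\<lambda>z. z / (1 - z)) F H"
proof (rule filterlim_at_withinI)
  have "((\<lambda>z::complex. z / (1 - z)) \<longlongrightarrow> 0 / (1 - 0)) H"
    by (intro tendsto_divide tendsto_diff tendsto_const tendsto_ident_at) simp
  then show "filterlim (\<lambda>z. z / (1 - z)) (nhds 0) H" by simp
  show "eventually (\<lambda>z. z / (1 - z) \<in> Ddom \<rho> - {0}) H"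
    by (rule ev_within) auto
qed

lemma Sigma_part:
  "(\<lambda>z. Sigma_transform \<rho> z - (\<Sum>k<p. complex_of_real (sg k) * z ^ k)) \<in> o[H](\<lambda>z. z ^ (p - 1))"
proof -
  have sS: "(\<lambda>u. S_transform \<rho> u - evc Sr u) \<in> o[F](\<lambda>u. u ^ (p - 1))"
    using S_part by (simp add: evc_Sr)
  have R1a: "(\<lambda>z. S_transform \<rho> (z / (1 - z)) - evc Sr (z / (1 - z))) \<in> o[H](\<lambda>z. (z / (1 - z)) ^ (p - 1))"
    by (rule landau_o.small.compose[OF sS Lh])
  have hb: "(\<lambda>z. (z / (1 - z)) ^ (p - 1)) \<in> O[H](\<lambda>z. z ^ (p - 1))"
  proof (rule bigoI_tendsto)
    have "((\<lambda>z::complex. (1 / (1 - z)) ^ (p - 1)) \<longlongrightarrow> (1 / (1 - 0)) ^ (p - 1)) H"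
      by (intro tendsto_power tendsto_divide tendsto_diff tendsto_const tendsto_ident_at) simp
    moreover have "eventually (\<lambda>z. (1 / (1 - z)) ^ (p - 1) = (z / (1 - z)) ^ (p - 1) / z ^ (p - 1)) H"
      by (rule ev_within) (simp add: power_divide)
    ultimately show "((\<lambda>z. (z / (1 - z)) ^ (p - 1) / z ^ (p - 1)) \<longlongrightarrow> (1 / (1 - 0)) ^ (p - 1)) H"
      by (simp add: Lim_transform_eventually)
    show "eventually (\<lambda>z::complex. z ^ (p - 1) \<noteq> 0) H" by (rule ev_within) simp
  qed
  have R1: "(\<lambda>z. S_transform \<rho> (z / (1 - z)) - evc Sr (z / (1 - z))) \<in> o[H](\<lambda>z. z ^ (p - 1))"
    by (rule landau_o.small_big_trans[OF R1a hb])
  have evcTr0: "(evc Tr \<longlongrightarrow> 0) H"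
  proof -
    have "((\<lambda>z. \<Sum>k\<in>{1..<p}. z ^ k) \<longlongrightarrow> (\<Sum>k\<in>{1..<p}. (0::complex) ^ k)) H"
      by (intro tendsto_sum tendsto_power tendsto_ident_at)
    moreover have "(\<Sum>k\<in>{1..<p}. (0::complex) ^ k) = 0" by (rule sum.neutral) auto
    ultimately show ?thesis by (simp add: evc_Tr[abs_def])
  qed
  have h0: "((\<lambda>z. z / (1 - z)) \<longlongrightarrow> 0) H"
    using Lh by (simp add: filterlim_at)
  have R2a: "(\<lambda>z. evc Sr (z / (1 - z)) - evc Sr (evc Tr z)) \<in> O[H](\<lambda>z. z / (1 - z) - evc Tr z)"
    unfolding evc_def by (rule poly_lip[OF h0 evcTr0[unfolded evc_def[abs_def]]])
  have geo: "eventually (\<lambda>z. z ^ p / (1 - z) = z / (1 - z) - evc Tr z) H"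
  proof (rule ev_within)
    fix z :: complex assume "z \<in> {z. z \<noteq> 1 \<and> z / (1 - z) \<in> Ddom \<rho>}"
    then have z1: "z \<noteq> 1" by simp
    have "{1..<p} = {1..p - 1}" using p2 by auto
    then have "z / (1 - z) - evc Tr z = z ^ (p - 1) * (z / (1 - z))"
      using geom_identity[OF z1, of "p - 1"] by (simp add: evc_Tr)
    also have "\<dots> = z ^ p / (1 - z)" using pow_k[of p z] p2 by (simp add: mult_ac)
    finally show "z ^ p / (1 - z) = z / (1 - z) - evc Tr z" by simp
  qed
  have zp: "(\<lambda>z::complex. z ^ p / (1 - z)) \<in> o[H](\<lambda>z. z ^ (p - 1))"
  proof (rule smalloI_tendsto)
    have "((\<lambda>z::complex. z / (1 - z)) \<longlongrightarrow> 0) H" by (rule h0)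
    moreover have "eventually (\<lambda>z. z / (1 - z) = z ^ p / (1 - z) / z ^ (p - 1)) H"
    proof (rule ev_within)
      fix z :: complex assume "z \<noteq> 0"
      then show "z / (1 - z) = z ^ p / (1 - z) / z ^ (p - 1)" using pow_k[of p z] p2 by simp
    qed
    ultimately show "((\<lambda>z::complex. z ^ p / (1 - z) / z ^ (p - 1)) \<longlongrightarrow> 0) H"
      by (simp add: Lim_transform_eventually)
    show "eventually (\<lambda>z::complex. z ^ (p - 1) \<noteq> 0) H" by (rule ev_within) simp
  qed
  have zp': "(\<lambda>z. z / (1 - z) - evc Tr z) \<in> o[H](\<lambda>z. z ^ (p - 1))"
    using zp by (subst (asm) landau_o.small.in_cong[OF geo])
  have R2: "(\<lambda>z. evc Sr (z / (1 - z)) - evc Sr (evc Tr z)) \<in> o[H](\<lambda>z. z ^ (p - 1))"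
    by (rule landau_o.big_small_trans[OF R2a zp'])
  have R3: "(\<lambda>z. evc Sr (evc Tr z) - (\<Sum>k<p. complex_of_real (sg k) * z ^ k)) \<in> o[H](\<lambda>z. z ^ (p - 1))"
  proof -
    have "(\<lambda>z. evc (pcompose Sr Tr) z - (\<Sum>k<p. complex_of_real (coeff (pcompose Sr Tr) k) * z ^ k))
        \<in> O[H](\<lambda>z. z ^ p)" by (rule evc_tail)
    then have "(\<lambda>z. evc Sr (evc Tr z) - (\<Sum>k<p. complex_of_real (sg k) * z ^ k)) \<in> O[H](\<lambda>z. z ^ p)"
      by (simp add: evc_pcompose sg_def)
    then show ?thesis by (rule landau_o.big_small_trans[OF _ pow_small]) (use p2 in simp)
  qed
  have "(\<lambda>z. (S_transform \<rho> (z / (1 - z)) - evc Sr (z / (1 - z))) + (evc Sr (z / (1 - z)) - evc Sr (evc Tr z))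
      + (evc Sr (evc Tr z) - (\<Sum>k<p. complex_of_real (sg k) * z ^ k))) \<in> o[H](\<lambda>z. z ^ (p - 1))"
    by (intro sum_in_smallo(1) R1 R2 R3)
  then show ?thesis by (simp add: Sigma_transform_def)
qed

end

theorem theorem8:
  fixes \<rho> :: "real measure" and p :: nat
  assumes "prob_space \<rho>"
    and "sets \<rho> = sets borel"
    and "AE x in \<rho>. x \<ge> 0"
    and "\<rho> \<noteq> return borel 0"
    and "p \<ge> 2"
    and "\<And>k. k \<le> p \<Longrightarrow> integrable \<rho> (\<lambda>x. x ^ k)"
  shows "(\<exists>s :: nat \<Rightarrow> real.
            s 0 = 1 / moment \<rho> 1
          \<and> s 1 = 1 / moment \<rho> 1 - moment \<rho> 2 / moment \<rho> 1 ^ 3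
          \<and> s 1 = - Var \<rho> / moment \<rho> 1 ^ 3
          \<and> (\<lambda>z. S_transform \<rho> z - (\<Sum>k<p. complex_of_real (s k) * z ^ k))
              \<in> o[at 0 within Ddom \<rho>](\<lambda>z. z ^ (p - 1)))
       \<and> (\<exists>\<sigma> :: nat \<Rightarrow> real.
            \<sigma> 0 = 1 / moment \<rho> 1
          \<and> \<sigma> 1 = 1 / moment \<rho> 1 - moment \<rho> 2 / moment \<rho> 1 ^ 3
          \<and> \<sigma> 1 = - Var \<rho> / moment \<rho> 1 ^ 3
          \<and> (\<lambda>z. Sigma_transform \<rho> z - (\<Sum>k<p. complex_of_real (\<sigma> k) * z ^ k))
              \<in> o[at 0 within {z. z \<noteq> 1 \<and> z / (1 - z) \<in> Ddom \<rho>}](\<lambda>z. z ^ (p - 1)))"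
proof -
  interpret rho_setting \<rho> p
    by (rule rho_setting.intro) (fact assms)+
  have var: "1 / moment \<rho> 1 - moment \<rho> 2 / moment \<rho> 1 ^ 3 = - Var \<rho> / moment \<rho> 1 ^ 3"
    using m1_ne by (simp add: Var_def field_simps power2_eq_square power3_eq_cube)
  have P1: "\<exists>s :: nat \<Rightarrow> real.
            s 0 = 1 / moment \<rho> 1
          \<and> s 1 = 1 / moment \<rho> 1 - moment \<rho> 2 / moment \<rho> 1 ^ 3
          \<and> s 1 = - Var \<rho> / moment \<rho> 1 ^ 3
          \<and> (\<lambda>z. S_transform \<rho> z - (\<Sum>k<p. complex_of_real (s k) * z ^ k))
              \<in> o[at 0 within Ddom \<rho>](\<lambda>z. z ^ (p - 1))"
    by (rule exI[of _ s]) (use s0 s1 var S_part in simp)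
  have P2: "\<exists>\<sigma> :: nat \<Rightarrow> real.
            \<sigma> 0 = 1 / moment \<rho> 1
          \<and> \<sigma> 1 = 1 / moment \<rho> 1 - moment \<rho> 2 / moment \<rho> 1 ^ 3
          \<and> \<sigma> 1 = - Var \<rho> / moment \<rho> 1 ^ 3
          \<and> (\<lambda>z. Sigma_transform \<rho> z - (\<Sum>k<p. complex_of_real (\<sigma> k) * z ^ k))
              \<in> o[at 0 within {z. z \<noteq> 1 \<and> z / (1 - z) \<in> Ddom \<rho>}](\<lambda>z. z ^ (p - 1))"
    by (rule exI[of _ sg]) (use sg0 sg1 s0 s1 var Sigma_part in simp)
  show ?thesis using P1 P2 by blast
qed

end
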